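(* Let $(\tilde\theta_n)_{n\ge0}$ be a sequence in $(0,\infty)^d$ satisfying, for some sequence $(X_n)_{n\ge1}$ in $\mathsf X$ and some sequence $(\gamma_n)_{n\ge1}$ of positive stepsizes, the recurrence $\tilde\theta_{n+1}(i)=\tilde\theta_n(i)\big(1+\gamma_{n+1}\frac{\rho(\theta_n(i))}{\theta_n(i)}\mathbf 1_{\mathsf X_i}(X_{n+1})\big)$ for all $i$ and $n\ge0$, where $\theta_n=\tilde\theta_n/\sum_{j=1}^d\tilde\theta_n(j)$. Then $$\theta_{n+1}=\theta_n+\gamma_{n+1}H(X_{n+1},\theta_n)+\gamma_{n+1}\Lambda_{n+1},$$ where $(\Lambda_n)_{n\ge1}$ is an $\mathbb R^d$-valued sequence satisfying $\sup_{n\ge0}\frac{|\Lambda_{n+1}|}{\gamma_{n+1}}\le\sqrt2\,\big(\sup_{(0,1)}\rho\big)^2$ (almost surely, when the sequences are random).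
   Context: $\mathsf X$ is a set partitioned into disjoint measurable strata $\mathsf X_1,\dots,\mathsf X_d$, with $I(x)=i$ iff $x\in\mathsf X_i$; $\Theta=\{\theta\in(0,1)^d:\sum_i\theta(i)=1\}$; $\rho:(0,1)\to(0,\infty)$ is measurable. The function $H:\mathsf X\times\Theta\to\mathbb R^d$ has components $H_i(x,\theta)=\rho(\theta(i))\mathbf 1_{\mathsf X_i}(x)-\theta(i)\rho(\theta(I(x)))$. $|\cdot|$ is the Euclidean norm. *)

theory Defs
  imports "HOL-Analysis.Analysis"
begin

text \<open>Strata are indexed by a finite type 'd; the stratum map I sends x to the
index of the stratum containing it, so the strata are the fibres of I
(a partition of the ground type into disjoint pieces).\<close>

definition stratum :: "('x \<Rightarrow> 'd) \<Rightarrow> 'd \<Rightarrow> 'x set" where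
  "stratum I i = {x. I x = i}"

definition normalize :: "real ^ 'd::finite \<Rightarrow> real ^ 'd" where
  "normalize v = (\<chi> i. v $ i / (\<Sum>j\<in>UNIV. v $ j))"

definition Hfun :: "('x \<Rightarrow> 'd::finite) \<Rightarrow> (real \<Rightarrow> real) \<Rightarrow> 'x \<Rightarrow> real ^ 'd \<Rightarrow> real ^ 'd" where
  "Hfun I \<rho> x \<theta> = (\<chi> i. \<rho> (\<theta> $ i) * indicator (stratum I i) x - \<theta> $ i * \<rho> (\<theta> $ (I x)))"

end

theory Submission imports Defs begin

lemma norm_w:
  fixes \<theta> :: "real ^ 'd::finite"
  assumes pos: "\<forall>i. \<theta> $ i > 0" and s1: "(\<Sum>i\<in>UNIV. \<theta> $ i) = 1"
  shows "norm ((\<chi> i. (if i = k then 1 else 0) - \<theta> $ i)) \<le> sqrt 2 * (1 - \<theta> $ k)"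
proof -
  have rest: "(\<Sum>i\<in>UNIV-{k}. \<theta> $ i) = 1 - \<theta> $ k"
    using s1 sum.remove[of UNIV k "\<lambda>i. \<theta> $ i"] by simp
  have le: "\<theta> $ i \<le> 1 - \<theta> $ k" if "i \<noteq> k" for i
  proof -
    have "\<theta> $ i \<le> (\<Sum>j\<in>UNIV-{k}. \<theta> $ j)"
      using that pos by (intro member_le_sum) (auto simp: less_imp_le)
    thus ?thesis using rest by simp
  qed
  have "(\<Sum>i\<in>UNIV. ((if i = k then 1 else 0) - \<theta> $ i)\<^sup>2)
      = (1 - \<theta> $ k)\<^sup>2 + (\<Sum>i\<in>UNIV-{k}. (\<theta> $ i)\<^sup>2)"
    by (subst sum.remove[of UNIV k]) (auto intro!: sum.cong simp: power2_eq_square)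
  also have "(\<Sum>i\<in>UNIV-{k}. (\<theta> $ i)\<^sup>2) \<le> (\<Sum>i\<in>UNIV-{k}. \<theta> $ i * (1 - \<theta> $ k))"
    using le pos by (intro sum_mono) (auto simp: power2_eq_square intro!: mult_left_mono less_imp_le)
  also have "\<dots> = (1 - \<theta> $ k)\<^sup>2" using rest by (simp add: sum_distrib_right[symmetric] power2_eq_square)
  finally have "(\<Sum>i\<in>UNIV. ((if i = k then 1 else 0) - \<theta> $ i)\<^sup>2) \<le> (sqrt 2 * (1 - \<theta> $ k))\<^sup>2"
    by (simp add: power_mult_distrib)
  moreover have "0 \<le> 1 - \<theta> $ k" unfolding rest[symmetric] using pos
    by (intro sum_nonneg) (simp add: less_imp_le)
  ultimately show ?thesis
    unfolding norm_vec_def L2_set_def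
    by (intro real_le_lsqrt) auto
qed

lemma step:
  fixes I :: "'x \<Rightarrow> 'd::finite" and t t' :: "real ^ 'd"
  assumes tpos: "\<forall>i. t $ i > 0" and t'pos: "\<forall>i. t' $ i > 0" and g: "g > 0"
    and rec: "\<forall>i. t' $ i = t $ i * (1 + g * (\<rho> (normalize t $ i) / normalize t $ i)
                        * indicator (stratum I i) x)"
  shows "normalize t' = normalize t + (g / (1 + g * \<rho> (normalize t $ I x))) *\<^sub>R Hfun I \<rho> x (normalize t)"
    and "1 + g * \<rho> (normalize t $ I x) > 0"
proof -
  define S where "S = (\<Sum>j\<in>UNIV. t $ j)"
  define k where "k = I x"
  define r where "r = \<rho> (normalize t $ k)"
  have S: "S > 0" unfolding S_def using tpos by (intro sum_pos) auto
  have th: "normalize t $ i = t $ i / S" for i by (simp add: normalize_def S_def)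
  have ind: "indicator (stratum I i) x = (if i = k then 1 else 0 :: real)" for i
    by (auto simp: stratum_def k_def indicator_def)
  have t'i: "t' $ i = t $ i + (if i = k then g * r * S else 0)" for i
  proof -
    have a: "t $ i > 0" using tpos by auto
    show ?thesis using rec[rule_format, of i] a S unfolding ind th r_def
      by (cases "i = k") (auto simp: field_simps)
  qed
  have S': "(\<Sum>j\<in>UNIV. t' $ j) = S * (1 + g * r)"
    unfolding t'i by (simp add: sum.distrib S_def algebra_simps)
  have "(\<Sum>j\<in>UNIV. t' $ j) > 0" using t'pos by (intro sum_pos) auto
  hence pos: "1 + g * r > 0" using S S' by (simp add: zero_less_mult_iff)
  thus "1 + g * \<rho> (normalize t $ I x) > 0" by (simp add: r_def k_def)
  show "normalize t' = normalize t + (g / (1 + g * \<rho> (normalize t $ I x))) *\<^sub>R Hfun I \<rho> x (normalize t)"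
  proof (rule vec_eq_iff[THEN iffD2, rule_format]) fix i
    have "normalize t' $ i = (t $ i + (if i = k then g * r * S else 0)) / (S * (1 + g * r))"
      unfolding normalize_def vec_lambda_beta S' t'i ..
    moreover have "Hfun I \<rho> x (normalize t) $ i = (if i = k then r else 0) - t $ i / S * r"
      by (simp add: Hfun_def ind th r_def k_def)
    moreover have "\<rho> (normalize t $ I x) = r" by (simp add: r_def k_def)
    ultimately have e: "(normalize t + (g / (1 + g * \<rho> (normalize t $ I x))) *\<^sub>R Hfun I \<rho> x (normalize t)) $ i
       = t $ i / S + g / (1 + g * r) * ((if i = k then r else 0) - t $ i / S * r)"
      "normalize t' $ i = (t $ i + (if i = k then g * r * S else 0)) / (S * (1 + g * r))"
      by (simp_all add: th)
    show "normalize t' $ i = (normalize t + (g / (1 + g * \<rho> (normalize t $ I x))) *\<^sub>R Hfun I \<rho> x (normalize t)) $ i"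
    proof -
      have "S + S * (g * r) > 0" using S pos by (metis distrib_left mult.right_neutral mult_pos_pos)
      moreover have "S * S + S * (S * (g * r)) > 0" using S pos
        by (metis \<open>S + S * (g * r) > 0\<close> distrib_left mult_pos_pos)
      ultimately show ?thesis unfolding e using S pos by (cases "i = k") (simp_all add: field_simps)
    qed
  qed
qed


lemma norm_props:
  fixes t :: "real ^ 'd::finite"
  assumes "\<forall>i. t $ i > 0"
  shows "\<forall>i. normalize t $ i > 0" "(\<Sum>i\<in>UNIV. normalize t $ i) = 1"
proof -
  have S: "(\<Sum>j\<in>UNIV. t $ j) > 0" using assms by (intro sum_pos) auto
  show "\<forall>i. normalize t $ i > 0" using S assms by (simp add: normalize_def)
  show "(\<Sum>i\<in>UNIV. normalize t $ i) = 1" using S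
    by (simp add: normalize_def sum_divide_distrib[symmetric])
qed

theorem lemma3p2:
  fixes I :: "'x \<Rightarrow> 'd::finite"
    and \<rho> :: "real \<Rightarrow> real"
    and \<theta>t :: "nat \<Rightarrow> real ^ 'd"
    and X :: "nat \<Rightarrow> 'x"
    and \<gamma> :: "nat \<Rightarrow> real"
  assumes rho_pos: "\<forall>t\<in>{0<..<1}. \<rho> t > 0"
    and theta_pos: "\<forall>n i. \<theta>t n $ i > 0"
    and gamma_pos: "\<forall>n. \<gamma> (Suc n) > 0"
    and recur: "\<forall>n i. \<theta>t (Suc n) $ i =
        \<theta>t n $ i * (1 + \<gamma> (Suc n) * (\<rho> (normalize (\<theta>t n) $ i) / normalize (\<theta>t n) $ i)
                        * indicator (stratum I i) (X (Suc n)))"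
  shows "\<exists>\<Lambda> :: nat \<Rightarrow> real ^ 'd.
           (\<forall>n. normalize (\<theta>t (Suc n)) = normalize (\<theta>t n)
                  + \<gamma> (Suc n) *\<^sub>R Hfun I \<rho> (X (Suc n)) (normalize (\<theta>t n))
                  + \<gamma> (Suc n) *\<^sub>R \<Lambda> (Suc n))
         \<and> (\<forall>M. (\<forall>t\<in>{0<..<1}. \<rho> t \<le> M) \<longrightarrow>
                (\<forall>n. norm (\<Lambda> (Suc n)) / \<gamma> (Suc n) \<le> sqrt 2 * M\<^sup>2))"
proof -
  define \<Lambda> where "\<Lambda> m = (1 / \<gamma> m) *\<^sub>R (normalize (\<theta>t m) - normalize (\<theta>t (m - 1))
      - \<gamma> m *\<^sub>R Hfun I \<rho> (X m) (normalize (\<theta>t (m - 1))))" for m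
  have A: "normalize (\<theta>t (Suc n)) = normalize (\<theta>t n)
                  + \<gamma> (Suc n) *\<^sub>R Hfun I \<rho> (X (Suc n)) (normalize (\<theta>t n))
                  + \<gamma> (Suc n) *\<^sub>R \<Lambda> (Suc n)" for n
    using gamma_pos[rule_format, of n] by (simp add: \<Lambda>_def)
  have B: "norm (\<Lambda> (Suc n)) / \<gamma> (Suc n) \<le> sqrt 2 * M\<^sup>2"
    if M: "\<forall>t\<in>{0<..<1}. \<rho> t \<le> M" for M n
  proof -
    define g where "g = \<gamma> (Suc n)"
    define \<theta> where "\<theta> = normalize (\<theta>t n)"
    define k where "k = I (X (Suc n))"
    define r where "r = \<rho> (\<theta> $ k)"
    define H where "H = Hfun I \<rho> (X (Suc n)) \<theta>"
    define w where "w = (\<chi> i. (if i = k then 1 else 0) - \<theta> $ i :: real ^ 'd)"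
    have g: "g > 0" using gamma_pos by (simp add: g_def)
    have st: "normalize (\<theta>t (Suc n)) = \<theta> + (g / (1 + g * r)) *\<^sub>R H" "1 + g * r > 0"
    proof -
      have t1: "\<forall>i. \<theta>t n $ i > 0" "\<forall>i. \<theta>t (Suc n) $ i > 0" using theta_pos by auto
      have rc: "\<forall>i. \<theta>t (Suc n) $ i = \<theta>t n $ i * (1 + g * (\<rho> (normalize (\<theta>t n) $ i) / normalize (\<theta>t n) $ i)
                        * indicator (stratum I i) (X (Suc n)))" using recur unfolding g_def by blast
      show "normalize (\<theta>t (Suc n)) = \<theta> + (g / (1 + g * r)) *\<^sub>R H" "1 + g * r > 0"
        using step[OF t1 g rc] unfolding \<theta>_def r_def k_def H_def by auto
    qed
    have Hw: "H = r *\<^sub>R w"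
      by (auto simp: vec_eq_iff H_def Hfun_def w_def r_def k_def indicator_def stratum_def algebra_simps)
    have L: "\<Lambda> (Suc n) = (- (g * r / (1 + g * r))) *\<^sub>R H"
    proof -
      have "\<Lambda> (Suc n) = (1 / g) *\<^sub>R ((g / (1 + g * r)) *\<^sub>R H - g *\<^sub>R H)"
        unfolding \<Lambda>_def using st by (simp add: g_def \<theta>_def H_def)
      also have "\<dots> = ((1 / g) * (g / (1 + g * r) - g)) *\<^sub>R H"
        by (simp only: scaleR_diff_left[symmetric] scaleR_scaleR)
      also have "(1 / g) * (g / (1 + g * r) - g) = - (g * r / (1 + g * r))"
        using g st(2) by (simp add: field_simps)
      finally show ?thesis .
    qed
    have tp: "\<forall>i. \<theta> $ i > 0" "(\<Sum>i\<in>UNIV. \<theta> $ i) = 1"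
      using norm_props[of "\<theta>t n"] theta_pos by (auto simp: \<theta>_def)
    have nw: "norm w \<le> sqrt 2 * (1 - \<theta> $ k)" unfolding w_def by (rule norm_w[OF tp])
    have eq: "norm (\<Lambda> (Suc n)) / g = r\<^sup>2 / (1 + g * r) * norm w"
    proof -
      have "g + g * (g * r) > 0" using g st(2) by (metis distrib_left mult.right_neutral mult_pos_pos)
      then show ?thesis using g st(2) unfolding L Hw by (simp add: power2_eq_square abs_mult field_simps)
    qed
    show ?thesis
    proof (cases "\<theta> $ k < 1")
      case True
      have r: "0 < r" "r \<le> M" using rho_pos M True tp(1) by (auto simp: r_def)
      have a0: "r\<^sup>2 \<le> r\<^sup>2 * (1 + g * r)"
      proof -
        have "0 \<le> r\<^sup>2 * (g * r)" using r g by simp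
        thus ?thesis by (simp add: algebra_simps)
      qed
      have a: "r\<^sup>2 / (1 + g * r) \<le> r\<^sup>2" using a0 st(2) by (simp add: divide_le_eq)
      have "sqrt 2 * (1 - \<theta> $ k) \<le> sqrt 2 * 1" using tp(1)[rule_format, of k]
        by (intro mult_left_mono) auto
      hence b: "norm w \<le> sqrt 2" using nw by linarith
      have c: "r\<^sup>2 \<le> M\<^sup>2" using r by (intro power_mono) auto
      have "r\<^sup>2 / (1 + g * r) * norm w \<le> r\<^sup>2 * sqrt 2"
        using a b by (intro mult_mono) auto
      also have "\<dots> \<le> M\<^sup>2 * sqrt 2" using c by (intro mult_right_mono) auto
      finally show ?thesis using eq by (simp add: g_def mult.commute)
    next
      case False
      have "sqrt 2 * (1 - \<theta> $ k) \<le> 0" using False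
        by (intro mult_nonneg_nonpos) auto
      then have "norm w = 0" using nw norm_ge_zero[of w] by linarith
      then have "norm (\<Lambda> (Suc n)) / g = 0" using eq by simp
      moreover have "0 \<le> sqrt 2 * M\<^sup>2" by simp
      ultimately show ?thesis unfolding g_def by linarith
    qed
  qed
  show ?thesis using A B by blast
qed

end
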